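(* Let $(L,\mathbf N)$ be an architecture with $L\ge2$, input dimension $d_{\mathrm{in}}=N_0$, output dimension $d_{\mathrm{out}}=N_L$, width $W=\max_\ell N_\ell$, let $D>0$, and consider $\|f\|_\infty=\operatorname{ess\,sup}_{x\in[-D,D]^{d_{\mathrm{in}}}}\|f(x)\|_\infty$ (Lebesgue measure). Let $\varepsilon\in(0,1/2)$ and $\theta\in\Theta_{L,\mathbf N}$, and let $k\ge0$ be the smallest integer such that $\|\theta\|_\infty\le\varepsilon^{-k}$ and $\max(W,L)\le\varepsilon^{-k}$. Let $m$ be an integer with $m\ge 2kL+k+1+\log_2(\lceil D\rceil)$ and $\eta:=2^{-m\lceil\log_2(\varepsilon^{-1})\rceil}$ (so $\eta\le\varepsilon^m$). Let $Q_\eta(\theta)$ be obtained by replacing each coordinate of $\theta$ by a closest point of $\eta\mathbb Z\cap[-\varepsilon^{-k},\varepsilon^{-k}]$. Then $Q_\eta(\theta)\in\Theta^{\max}_{L,\mathbf N}(\varepsilon^{-k})\cap(\eta\mathbb Z)^{d_{L,\mathbf N}}$ and $\|R_\theta-R_{Q_\eta(\theta)}\|_\infty\le\varepsilon$.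
   Context: ReLU $\rho(x)=\max(0,x)$ coordinatewise. Architecture $(L,\mathbf N)$, $\mathbf N=(N_0,\dots,N_L)$; parameters $\theta=(W_1,\dots,W_L,b_1,\dots,b_L)$, $W_\ell\in\mathbb R^{N_\ell\times N_{\ell-1}}$, $b_\ell\in\mathbb R^{N_\ell}$, forming $\Theta_{L,\mathbf N}\cong\mathbb R^{d_{L,\mathbf N}}$, $d_{L,\mathbf N}=\sum_\ell N_\ell(N_{\ell-1}+1)$; $\|\theta\|_\infty$ = max absolute value of coordinates. Realization: $R_\theta(x)=W_Ly_{L-1}(x)+b_L$, $y_0=x$, $y_\ell=\rho(W_\ell y_{\ell-1}+b_\ell)$, $1\le\ell\le L-1$. $\Theta^{\max}_{L,\mathbf N}(r)$ is the set of $\theta$ all of whose entries (of all $W_\ell,b_\ell$) have absolute value at most $r$. *)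

theory Defs
  imports "HOL-Analysis.Analysis" "HOL-Probability.Essential_Supremum"
begin

text \<open>Architecture: list N = [N_0,...,N_L], so L = length N - 1.
 Parameters: weights Wt l i j (layer l in 1..L, row i < N_l, column j < N_(l-1))
 and biases bs l i (i < N_l). Vectors are functions nat => real, only the
 indices below the relevant dimension matter.\<close>

definition depth :: "nat list \<Rightarrow> nat" where
  "depth N = length N - 1"

definition width :: "nat list \<Rightarrow> nat" where
  "width N = Max (set N)"

definition relu :: "real \<Rightarrow> real" where
  "relu x = max 0 x"

definition affine_layer ::
  "nat list \<Rightarrow> (nat \<Rightarrow> nat \<Rightarrow> nat \<Rightarrow> real) \<Rightarrow> (nat \<Rightarrow> nat \<Rightarrow> real) \<Rightarrow> nat
   \<Rightarrow> (nat \<Rightarrow> real) \<Rightarrow> (nat \<Rightarrow> real)" where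
  "affine_layer N Wt bs l y =
     (\<lambda>i. if i < N ! l then (\<Sum>j<N ! (l - 1). Wt l i j * y j) + bs l i else 0)"

fun hidden ::
  "nat list \<Rightarrow> (nat \<Rightarrow> nat \<Rightarrow> nat \<Rightarrow> real) \<Rightarrow> (nat \<Rightarrow> nat \<Rightarrow> real) \<Rightarrow> nat
   \<Rightarrow> (nat \<Rightarrow> real) \<Rightarrow> (nat \<Rightarrow> real)" where
  "hidden N Wt bs 0 x = x"
| "hidden N Wt bs (Suc l) x = (\<lambda>i. relu (affine_layer N Wt bs (Suc l) (hidden N Wt bs l x) i))"

definition realization ::
  "nat list \<Rightarrow> (nat \<Rightarrow> nat \<Rightarrow> nat \<Rightarrow> real) \<Rightarrow> (nat \<Rightarrow> nat \<Rightarrow> real)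
   \<Rightarrow> (nat \<Rightarrow> real) \<Rightarrow> (nat \<Rightarrow> real)" where
  "realization N Wt bs x =
     affine_layer N Wt bs (depth N) (hidden N Wt bs (depth N - 1) x)"

definition param_abs_values ::
  "nat list \<Rightarrow> (nat \<Rightarrow> nat \<Rightarrow> nat \<Rightarrow> real) \<Rightarrow> (nat \<Rightarrow> nat \<Rightarrow> real) \<Rightarrow> real set" where
  "param_abs_values N Wt bs =
     {\<bar>Wt l i j\<bar> | l i j. 1 \<le> l \<and> l \<le> depth N \<and> i < N ! l \<and> j < N ! (l - 1)}
     \<union> {\<bar>bs l i\<bar> | l i. 1 \<le> l \<and> l \<le> depth N \<and> i < N ! l}"

definition param_norm ::
  "nat list \<Rightarrow> (nat \<Rightarrow> nat \<Rightarrow> nat \<Rightarrow> real) \<Rightarrow> (nat \<Rightarrow> nat \<Rightarrow> real) \<Rightarrow> real" where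
  "param_norm N Wt bs = Max (param_abs_values N Wt bs)"

definition all_coords ::
  "nat list \<Rightarrow> (nat \<Rightarrow> nat \<Rightarrow> nat \<Rightarrow> real) \<Rightarrow> (nat \<Rightarrow> nat \<Rightarrow> real) \<Rightarrow> (real \<Rightarrow> bool) \<Rightarrow> bool" where
  "all_coords N Wt bs P \<longleftrightarrow>
     (\<forall>l i j. 1 \<le> l \<and> l \<le> depth N \<and> i < N ! l \<and> j < N ! (l - 1) \<longrightarrow> P (Wt l i j))
   \<and> (\<forall>l i. 1 \<le> l \<and> l \<le> depth N \<and> i < N ! l \<longrightarrow> P (bs l i))"

definition all_coords2 ::
  "nat list \<Rightarrow> (nat \<Rightarrow> nat \<Rightarrow> nat \<Rightarrow> real) \<Rightarrow> (nat \<Rightarrow> nat \<Rightarrow> real)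
   \<Rightarrow> (nat \<Rightarrow> nat \<Rightarrow> nat \<Rightarrow> real) \<Rightarrow> (nat \<Rightarrow> nat \<Rightarrow> real) \<Rightarrow> (real \<Rightarrow> real \<Rightarrow> bool) \<Rightarrow> bool" where
  "all_coords2 N Wt bs Wq bq P \<longleftrightarrow>
     (\<forall>l i j. 1 \<le> l \<and> l \<le> depth N \<and> i < N ! l \<and> j < N ! (l - 1) \<longrightarrow> P (Wt l i j) (Wq l i j))
   \<and> (\<forall>l i. 1 \<le> l \<and> l \<le> depth N \<and> i < N ! l \<longrightarrow> P (bs l i) (bq l i))"

definition in_Theta_max ::
  "nat list \<Rightarrow> real \<Rightarrow> (nat \<Rightarrow> nat \<Rightarrow> nat \<Rightarrow> real) \<Rightarrow> (nat \<Rightarrow> nat \<Rightarrow> real) \<Rightarrow> bool" where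
  "in_Theta_max N r Wt bs \<longleftrightarrow> all_coords N Wt bs (\<lambda>t. \<bar>t\<bar> \<le> r)"

definition grid :: "real \<Rightarrow> real \<Rightarrow> real set" where
  "grid \<eta> r = {\<eta> * of_int z | z. True} \<inter> {-r..r}"

definition is_closest_point :: "real set \<Rightarrow> real \<Rightarrow> real \<Rightarrow> bool" where
  "is_closest_point S t q \<longleftrightarrow> q \<in> S \<and> (\<forall>s\<in>S. \<bar>t - q\<bar> \<le> \<bar>t - s\<bar>)"

definition cube_measure :: "nat \<Rightarrow> real \<Rightarrow> (nat \<Rightarrow> real) measure" where
  "cube_measure d D = restrict_space (Pi\<^sub>M {..<d} (\<lambda>_. lborel)) (Pi\<^sub>E {..<d} (\<lambda>_. {-D..D}))"

definition sup_norm_cube :: "nat \<Rightarrow> nat \<Rightarrow> real \<Rightarrow> ((nat \<Rightarrow> real) \<Rightarrow> (nat \<Rightarrow> real)) \<Rightarrow> ereal" where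
  "sup_norm_cube din dout D f =
     esssup (cube_measure din D) (\<lambda>x. ereal (Max ((\<lambda>i. \<bar>f x i\<bar>) ` {..<dout})))"

end

theory Submission
  imports Defs
begin


lemma coord_meas: "(\<lambda>x. x i) \<in> borel_measurable (cube_measure d D)"
proof (cases "i < d")
  case True
  then show ?thesis unfolding cube_measure_def
    by (intro measurable_restrict_space1) (auto intro!: measurable_component_singleton)
next
  case False
  have "(\<lambda>x. x i) \<in> borel_measurable (cube_measure d D) \<longleftrightarrow> (\<lambda>x. undefined::real) \<in> borel_measurable (cube_measure d D)"
    by (rule measurable_cong[where f="\<lambda>x. x i" and g="\<lambda>x. undefined::real"]) (use False in \<open>auto simp: cube_measure_def space_restrict_space space_PiM PiE_def extensional_def\<close>)
  then show ?thesis by simp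
qed

lemma hidden_meas: "(\<lambda>x. hidden N Wt bs l x i) \<in> borel_measurable (cube_measure d D)"
proof (induction l arbitrary: i)
  case 0
  then show ?case using coord_meas by simp
next
  case (Suc l)
  show ?case unfolding hidden.simps relu_def affine_layer_def
    using Suc.IH by measurable
qed

lemma real_meas: "(\<lambda>x. realization N Wt bs x i) \<in> borel_measurable (cube_measure d D)"
  unfolding realization_def affine_layer_def using hidden_meas by measurable



lemma aff_bound:
  fixes r B :: real
  assumes "real n \<le> r" "\<forall>j<n. \<bar>y j\<bar> \<le> B" "\<forall>j<n. \<bar>w j\<bar> \<le> r" "\<bar>b\<bar> \<le> r" "B \<ge> 0" "r \<ge> 0"
  shows "\<bar>(\<Sum>j<n. w j * y j) + b\<bar> \<le> r*r*B + r"
proof -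
  have "\<bar>\<Sum>j<n. w j * y j\<bar> \<le> (\<Sum>j<n. \<bar>w j * y j\<bar>)" by (rule sum_abs)
  also have "\<dots> \<le> (\<Sum>j<n. r * B)"
    using assms by (intro sum_mono) (auto simp: abs_mult intro!: mult_mono)
  also have "\<dots> = real n * (r * B)" by simp
  also have "\<dots> \<le> r * (r * B)" using assms by (intro mult_right_mono) auto
  finally show ?thesis using assms by (simp add: algebra_simps)
qed

lemma aff_diff:
  fixes r B E \<eta> :: real
  assumes "real n \<le> r" "\<forall>j<n. \<bar>y j\<bar> \<le> B" "\<forall>j<n. \<bar>y j - y' j\<bar> \<le> E"
    "\<forall>j<n. \<bar>w j - w' j\<bar> \<le> \<eta>" "\<forall>j<n. \<bar>w' j\<bar> \<le> r" "\<bar>b - b'\<bar> \<le> \<eta>"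
    "B \<ge> 0" "E \<ge> 0" "\<eta> \<ge> 0" "r \<ge> 0"
  shows "\<bar>((\<Sum>j<n. w j * y j) + b) - ((\<Sum>j<n. w' j * y' j) + b')\<bar> \<le> r*\<eta>*B + r*r*E + \<eta>"
proof -
  have eq: "((\<Sum>j<n. w j * y j) + b) - ((\<Sum>j<n. w' j * y' j) + b')
     = (\<Sum>j<n. (w j - w' j) * y j + w' j * (y j - y' j)) + (b - b')"
    by (simp add: sum_subtractf[symmetric] algebra_simps sum.distrib)
  have "\<bar>\<Sum>j<n. (w j - w' j) * y j + w' j * (y j - y' j)\<bar> \<le> (\<Sum>j<n. \<bar>(w j - w' j) * y j + w' j * (y j - y' j)\<bar>)" by (rule sum_abs)
  also have "\<dots> \<le> (\<Sum>j<n. \<eta> * B + r * E)"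
  proof (intro sum_mono)
    fix j assume "j \<in> {..<n}"
    then have j: "j < n" by simp
    have "\<bar>(w j - w' j) * y j\<bar> \<le> \<eta> * B" using assms j by (auto simp: abs_mult intro!: mult_mono)
    moreover have "\<bar>w' j * (y j - y' j)\<bar> \<le> r * E" using assms j by (auto simp: abs_mult intro!: mult_mono)
    ultimately show "\<bar>(w j - w' j) * y j + w' j * (y j - y' j)\<bar> \<le> \<eta> * B + r * E"
      by (smt (verit) abs_triangle_ineq)
  qed
  also have "\<dots> = real n * (\<eta> * B + r * E)" by simp
  also have "\<dots> \<le> r * (\<eta> * B + r * E)" using assms by (intro mult_right_mono) auto
  finally show ?thesis unfolding eq using assms by (simp add: algebra_simps)
qed



lemma hidden_bounds:
  fixes r \<eta> D :: real
  assumes r2: "r \<ge> 2" and e0: "\<eta> \<ge> 0" and D0: "D \<ge> 0"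
  and wid: "\<forall>l. 1 \<le> l \<and> l \<le> depth N \<longrightarrow> real (N!(l-1)) \<le> r"
  and Wb: "\<forall>l i j. 1 \<le> l \<and> l \<le> depth N \<and> i < N!l \<and> j < N!(l-1) \<longrightarrow>
      \<bar>Wt l i j\<bar> \<le> r \<and> \<bar>Wq l i j\<bar> \<le> r \<and> \<bar>Wt l i j - Wq l i j\<bar> \<le> \<eta>"
  and bb: "\<forall>l i. 1 \<le> l \<and> l \<le> depth N \<and> i < N!l \<longrightarrow> \<bar>bs l i\<bar> \<le> r \<and> \<bar>bs l i - bq l i\<bar> \<le> \<eta>"
  and x: "\<forall>j<N!0. \<bar>x j\<bar> \<le> D"
  shows "l \<le> depth N \<Longrightarrow> \<forall>i<N!l. \<bar>hidden N Wt bs l x i\<bar> + 1 \<le> r^(2*l)*(D+1)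
     \<and> \<bar>hidden N Wt bs l x i - hidden N Wq bq l x i\<bar> \<le> real l * \<eta> * r^(2*l) * (D+1) / r"
proof (induction l)
  case 0
  then show ?case using x by simp
next
  case (Suc l)
  define P where "P = r^(2*l)*(D+1)"
  have P1: "P \<ge> 1"
  proof -
    have "r^(2*l) \<ge> 1" using r2 by (intro one_le_power) simp
    moreover have "D + 1 \<ge> 1" using D0 by simp
    ultimately show ?thesis using mult_mono[of 1 "r^(2*l)" 1 "D+1"] by (simp add: P_def)
  qed
  from Suc have IH: "\<forall>i<N!l. \<bar>hidden N Wt bs l x i\<bar> \<le> P - 1
     \<and> \<bar>hidden N Wt bs l x i - hidden N Wq bq l x i\<bar> \<le> real l * \<eta> * P / r"
    unfolding P_def by force
  have nl: "real (N!l) \<le> r" using wid[rule_format, of "Suc l"] Suc.prems by simp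
  show ?case
  proof (intro allI impI)
    fix i assume i: "i < N ! Suc l"
    have Wi: "\<forall>j<N!l. \<bar>Wt (Suc l) i j\<bar> \<le> r \<and> \<bar>Wq (Suc l) i j\<bar> \<le> r \<and> \<bar>Wt (Suc l) i j - Wq (Suc l) i j\<bar> \<le> \<eta>"
      using Wb[rule_format, of "Suc l" i] Suc.prems i by simp
    have bi: "\<bar>bs (Suc l) i\<bar> \<le> r \<and> \<bar>bs (Suc l) i - bq (Suc l) i\<bar> \<le> \<eta>"
      using bb[rule_format, of "Suc l" i] Suc.prems i by simp
    let ?a = "(\<Sum>j<N!l. Wt (Suc l) i j * hidden N Wt bs l x j) + bs (Suc l) i"
    let ?b = "(\<Sum>j<N!l. Wq (Suc l) i j * hidden N Wq bq l x j) + bq (Suc l) i"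
    have h1: "hidden N Wt bs (Suc l) x i = relu ?a" using i by (simp add: affine_layer_def)
    have h2: "hidden N Wq bq (Suc l) x i = relu ?b" using i by (simp add: affine_layer_def)
    have A: "\<bar>?a\<bar> \<le> r*r*(P-1) + r"
      by (rule aff_bound) (use nl IH Wi bi P1 r2 in auto)
    have B: "\<bar>?a - ?b\<bar> \<le> r*\<eta>*(P-1) + r*r*(real l * \<eta> * P / r) + \<eta>"
      by (rule aff_diff) (use nl IH Wi bi P1 r2 e0 in auto)
    have rel1: "\<bar>relu u\<bar> \<le> \<bar>u\<bar>" for u by (simp add: relu_def)
    have rel2: "\<bar>relu u - relu v\<bar> \<le> \<bar>u - v\<bar>" for u v by (simp add: relu_def)
    have P': "r^(2*Suc l)*(D+1) = r*r*P" unfolding P_def by (simp add: power_add power_mult_distrib)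
    have rr: "2*r \<le> r*r" using r2 by (intro mult_right_mono) auto
    have rr1: "r + 1 \<le> r*r" using rr r2 by linarith
    have c1: "r*r*(P-1) + r + 1 \<le> r*r*P" using rr1 by (simp add: algebra_simps)
    have c2: "r*\<eta>*(P-1) + r*r*(real l * \<eta> * P / r) + \<eta> \<le> real (Suc l) * \<eta> * (r*r*P) / r"
    proof -
      have "r*r*(real l * \<eta> * P / r) = r * real l * \<eta> * P" using r2 by (simp add: field_simps)
      moreover have "real (Suc l) * \<eta> * (r*r*P) / r = r * real l * \<eta> * P + r * \<eta> * P"
        using r2 by (simp add: field_simps)
      moreover have "r*\<eta>*(P-1) + \<eta> \<le> r * \<eta> * P" using r2 e0 mult_right_mono[of 1 r \<eta>] by (simp add: algebra_simps)
      ultimately show ?thesis by linarith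
    qed
    have G1: "\<bar>relu ?a\<bar> + 1 \<le> r*r*P" using A c1 rel1[of ?a] by linarith
    have G2: "\<bar>relu ?a - relu ?b\<bar> \<le> real (Suc l) * \<eta> * (r*r*P) / r" using B c2 rel2[of ?a ?b] by linarith
    show "\<bar>hidden N Wt bs (Suc l) x i\<bar> + 1 \<le> r^(2*Suc l)*(D+1)
     \<and> \<bar>hidden N Wt bs (Suc l) x i - hidden N Wq bq (Suc l) x i\<bar> \<le> real (Suc l) * \<eta> * r^(2*Suc l) * (D+1) / r"
    proof -
      have P'': "real (Suc l) * \<eta> * r^(2*Suc l) * (D+1) / r = real (Suc l) * \<eta> * (r*r*P) / r"
        unfolding P'[symmetric] by (simp add: mult.assoc)
      show ?thesis unfolding h1 h2 P'' P' using G1 G2 by blast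
    qed
  qed
qed



lemma eps_ineq:
  fixes \<epsilon> D :: real and k m L :: nat
  assumes eps: "0 < \<epsilon>" "\<epsilon> < 1/2" and D: "D > 0"
    and m_ge: "real m \<ge> 2 * real k * real L + real k + 1 + log 2 (real_of_int \<lceil>D\<rceil>)"
    and r2: "\<epsilon> powr (- real k) \<ge> 2"
  shows "2 powr (- (real m * real_of_int \<lceil>log 2 (1 / \<epsilon>)\<rceil>)) * (\<epsilon> powr (- real k))^(2*L) * (D+1) \<le> \<epsilon>"
proof -
  define r where "r = \<epsilon> powr (- real k)"
  define c where "c = real_of_int \<lceil>log 2 (1 / \<epsilon>)\<rceil>"
  define C where "C = real_of_int \<lceil>D\<rceil>"
  have C1: "C \<ge> 1" "D \<le> C" using D unfolding C_def by (auto simp: le_of_int_ceiling) 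
  have lg: "log 2 (1/\<epsilon>) = - log 2 \<epsilon>" using eps by (simp add: log_divide)
  have "c \<ge> log 2 (1/\<epsilon>)" unfolding c_def by simp
  have eta: "2 powr (- (real m * c)) \<le> \<epsilon> powr real m"
  proof -
    have "2 powr (- (real m * c)) \<le> 2 powr (real m * log 2 \<epsilon>)"
      proof (intro powr_mono)
      have "real m * (- log 2 \<epsilon>) \<le> real m * c" using \<open>c \<ge> log 2 (1/\<epsilon>)\<close> lg by (intro mult_left_mono) auto
      then show "- (real m * c) \<le> real m * log 2 \<epsilon>" by simp
    qed simp
    also have "\<dots> = (2 powr log 2 \<epsilon>) powr real m" by (simp add: powr_powr mult.commute)
    also have "\<dots> = \<epsilon> powr real m" using eps by simp
    finally show ?thesis .
  qed
  have rp: "r^(2*L) = \<epsilon> powr (- (real k * (2 * real L)))"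
    unfolding r_def using eps by (simp add: powr_realpow[symmetric] powr_powr)
  have rDC: "D + 1 \<le> r * C"
  proof -
    have "2 * C \<le> r * C" using C1 r2 unfolding r_def by (intro mult_right_mono) auto
    then show ?thesis using C1 by linarith
  qed
  have "2 powr (- (real m * c)) * r^(2*L) * (D+1) \<le> \<epsilon> powr real m * r^(2*L) * (r * C)"
    using eta rDC D by (intro mult_mono) auto
  also have "\<dots> = \<epsilon> powr (real m - 2 * real k * real L - real k) * C"
    unfolding rp unfolding r_def by (simp add: powr_add[symmetric] algebra_simps)
  also have "\<dots> \<le> \<epsilon> powr (1 + log 2 C) * C"
    using m_ge eps C1 unfolding C_def by (intro mult_right_mono powr_mono') auto
  also have "\<dots> = \<epsilon> * \<epsilon> powr (log 2 C) * C" using eps by (simp add: powr_add)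
  also have "\<dots> \<le> \<epsilon> * (1/2) powr (log 2 C) * C"
    using eps C1 by (intro mult_right_mono mult_left_mono powr_mono2) auto
  also have "\<dots> = \<epsilon>" using C1 by (simp add: powr_divide)
  finally show ?thesis unfolding r_def c_def .
qed


lemma closest_err:
  fixes \<eta> r t q :: real
  assumes e: "\<eta> > 0" and t: "\<bar>t\<bar> \<le> r" and c: "is_closest_point (grid \<eta> r) t q"
  shows "\<bar>q\<bar> \<le> r \<and> q \<in> {\<eta> * of_int z | z. True} \<and> \<bar>t - q\<bar> \<le> \<eta>"
proof -
  have qg: "q \<in> grid \<eta> r" and cl: "\<forall>s\<in>grid \<eta> r. \<bar>t - q\<bar> \<le> \<bar>t - s\<bar>"
    using c unfolding is_closest_point_def by auto
  obtain s where sg: "s \<in> grid \<eta> r" and st: "\<bar>t - s\<bar> \<le> \<eta>"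
  proof (cases "t \<ge> 0")
    case True
    define z where "z = \<lfloor>t/\<eta>\<rfloor>"
    have z1: "real_of_int z \<le> t/\<eta>" "t/\<eta> < real_of_int z + 1" "0 \<le> z"
      unfolding z_def using True e by (auto simp: floor_less_iff)
    have "\<eta> * real_of_int z \<le> t" using z1 e by (simp add: field_simps)
    moreover have "t < \<eta> * real_of_int z + \<eta>" using z1 e by (simp add: field_simps)
    moreover have "0 \<le> \<eta> * real_of_int z" using z1 e by simp
    ultimately show ?thesis using that[of "\<eta> * real_of_int z"] t unfolding grid_def by auto
  next
    case False
    define z where "z = \<lceil>t/\<eta>\<rceil>"
    have z1: "t/\<eta> \<le> real_of_int z" "real_of_int z - 1 < t/\<eta>" "z \<le> 0"
      unfolding z_def using False e ceiling_correct[of "t/\<eta>"] by (auto simp: ceiling_le_iff divide_nonpos_pos)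
    have "t \<le> \<eta> * real_of_int z" using z1 e by (simp add: field_simps)
    moreover have "\<eta> * real_of_int z - \<eta> < t" using z1 e by (simp add: field_simps)
    moreover have "\<eta> * real_of_int z \<le> 0" using z1 e by (simp add: mult_nonneg_nonpos)
    ultimately show ?thesis using that[of "\<eta> * real_of_int z"] t unfolding grid_def by auto
  qed
  then show ?thesis using qg cl unfolding grid_def by force
qed

theorem mainTheorem7:
  fixes N :: "nat list"
    and Wt Wq :: "nat \<Rightarrow> nat \<Rightarrow> nat \<Rightarrow> real"
    and bs bq :: "nat \<Rightarrow> nat \<Rightarrow> real"
    and D \<epsilon> :: real and k m :: nat
  assumes arch: "depth N \<ge> 2" "\<forall>n\<in>set N. n \<ge> 1"
    and D_pos: "D > 0"
    and eps: "0 < \<epsilon>" "\<epsilon> < 1/2"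
    and k_ok: "param_norm N Wt bs \<le> \<epsilon> powr (- real k)"
              "real (max (width N) (depth N)) \<le> \<epsilon> powr (- real k)"
    and k_least: "\<forall>j<k. \<not> (param_norm N Wt bs \<le> \<epsilon> powr (- real j)
                          \<and> real (max (width N) (depth N)) \<le> \<epsilon> powr (- real j))"
    and m_ge: "real m \<ge> 2 * real k * real (depth N) + real k + 1 + log 2 (real_of_int \<lceil>D\<rceil>)"
    and quant: "all_coords2 N Wt bs Wq bq
         (\<lambda>t q. is_closest_point
                 (grid (2 powr (- (real m * real_of_int \<lceil>log 2 (1 / \<epsilon>)\<rceil>))) (\<epsilon> powr (- real k))) t q)"
  shows "in_Theta_max N (\<epsilon> powr (- real k)) Wq bq
       \<and> all_coords N Wq bq
           (\<lambda>q. q \<in> {2 powr (- (real m * real_of_int \<lceil>log 2 (1 / \<epsilon>)\<rceil>)) * of_int z | z. True})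
       \<and> sup_norm_cube (N ! 0) (N ! depth N) D
           (\<lambda>x i. realization N Wt bs x i - realization N Wq bq x i) \<le> ereal \<epsilon>"

proof -
  define L where "L = depth N"
  define r where "r = \<epsilon> powr (- real k)"
  define \<eta> where "\<eta> = 2 powr (- (real m * real_of_int \<lceil>log 2 (1 / \<epsilon>)\<rceil>))"
  have e0: "\<eta> > 0" unfolding \<eta>_def by simp
  have L2: "L \<ge> 2" using arch unfolding L_def by simp
  have lenN: "length N = L + 1" using L2 unfolding L_def depth_def by simp
  have r2: "r \<ge> 2" using k_ok(2) L2 unfolding r_def L_def by simp
  have widthb: "\<And>l. l < length N \<Longrightarrow> N!l \<le> width N"
    unfolding width_def by (simp add: nth_mem)
  have wr: "real (width N) \<le> r" using k_ok(2) unfolding r_def by simp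
  have Lr: "real L \<le> r" using k_ok(2) unfolding r_def L_def by simp
  have wid: "\<forall>l. 1 \<le> l \<and> l \<le> depth N \<longrightarrow> real (N!(l-1)) \<le> r"
  proof (intro allI impI)
    fix l assume "1 \<le> l \<and> l \<le> depth N"
    then have "l - 1 < length N" using lenN unfolding L_def by linarith
    then have "N!(l-1) \<le> width N" by (rule widthb)
    then show "real (N!(l-1)) \<le> r" using wr by linarith
  qed
  define w where "w = width N"
  have fin: "finite (param_abs_values N Wt bs)"
  proof -
    have "param_abs_values N Wt bs \<subseteq>
      (\<lambda>(l,i,j). \<bar>Wt l i j\<bar>) ` ({..L} \<times> {..w} \<times> {..w}) \<union> (\<lambda>(l,i). \<bar>bs l i\<bar>) ` ({..L} \<times> {..w})"
    proof
      fix a assume "a \<in> param_abs_values N Wt bs"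
      then show "a \<in> (\<lambda>(l,i,j). \<bar>Wt l i j\<bar>) ` ({..L} \<times> {..w} \<times> {..w}) \<union> (\<lambda>(l,i). \<bar>bs l i\<bar>) ` ({..L} \<times> {..w})"
        unfolding param_abs_values_def
      proof (elim UnE CollectE exE conjE)
        fix l i j assume *: "a = \<bar>Wt l i j\<bar>" "1 \<le> l" "l \<le> depth N" "i < N ! l" "j < N ! (l - 1)"
        have "N!l \<le> w" "N!(l-1) \<le> w" using * lenN widthb unfolding L_def w_def by auto
        then have "(l,i,j) \<in> {..L} \<times> {..w} \<times> {..w}" using * unfolding L_def by auto
        then show ?thesis using * by force
      next
        fix l i assume *: "a = \<bar>bs l i\<bar>" "1 \<le> l" "l \<le> depth N" "i < N ! l"
        have "N!l \<le> w" using * lenN widthb unfolding L_def w_def by auto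
        then have "(l,i) \<in> {..L} \<times> {..w}" using * unfolding L_def by auto
        then show ?thesis using * by force
      qed
    qed
    then show ?thesis by (rule finite_subset) auto
  qed
  have pW: "\<And>l i j. 1 \<le> l \<Longrightarrow> l \<le> depth N \<Longrightarrow> i < N!l \<Longrightarrow> j < N!(l-1) \<Longrightarrow> \<bar>Wt l i j\<bar> \<le> r"
  proof -
    fix l i j assume "1 \<le> l" "l \<le> depth N" "i < N!l" "j < N!(l-1)"
    then have "\<bar>Wt l i j\<bar> \<in> param_abs_values N Wt bs" unfolding param_abs_values_def by blast
    then have "\<bar>Wt l i j\<bar> \<le> param_norm N Wt bs" unfolding param_norm_def using fin by simp
    then show "\<bar>Wt l i j\<bar> \<le> r" using k_ok(1) unfolding r_def by linarith
  qed
  have pb: "\<And>l i. 1 \<le> l \<Longrightarrow> l \<le> depth N \<Longrightarrow> i < N!l \<Longrightarrow> \<bar>bs l i\<bar> \<le> r"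
  proof -
    fix l i assume "1 \<le> l" "l \<le> depth N" "i < N!l"
    then have "\<bar>bs l i\<bar> \<in> param_abs_values N Wt bs" unfolding param_abs_values_def by blast
    then have "\<bar>bs l i\<bar> \<le> param_norm N Wt bs" unfolding param_norm_def using fin by simp
    then show "\<bar>bs l i\<bar> \<le> r" using k_ok(1) unfolding r_def by linarith
  qed
  have QW: "\<And>l i j. 1 \<le> l \<Longrightarrow> l \<le> depth N \<Longrightarrow> i < N!l \<Longrightarrow> j < N!(l-1) \<Longrightarrow>
     \<bar>Wq l i j\<bar> \<le> r \<and> Wq l i j \<in> {\<eta> * of_int z | z. True} \<and> \<bar>Wt l i j - Wq l i j\<bar> \<le> \<eta>"
  proof -
    fix l i j assume a: "1 \<le> l" "l \<le> depth N" "i < N!l" "j < N!(l-1)"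
    have "is_closest_point (grid \<eta> r) (Wt l i j) (Wq l i j)"
      using quant a unfolding all_coords2_def r_def[symmetric] \<eta>_def[symmetric] by blast
    then show "\<bar>Wq l i j\<bar> \<le> r \<and> Wq l i j \<in> {\<eta> * of_int z | z. True} \<and> \<bar>Wt l i j - Wq l i j\<bar> \<le> \<eta>"
      by (rule closest_err[OF e0 pW[OF a]])
  qed
  have Qb: "\<And>l i. 1 \<le> l \<Longrightarrow> l \<le> depth N \<Longrightarrow> i < N!l \<Longrightarrow>
     \<bar>bq l i\<bar> \<le> r \<and> bq l i \<in> {\<eta> * of_int z | z. True} \<and> \<bar>bs l i - bq l i\<bar> \<le> \<eta>"
  proof -
    fix l i assume a: "1 \<le> l" "l \<le> depth N" "i < N!l"
    have "is_closest_point (grid \<eta> r) (bs l i) (bq l i)"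
      using quant a unfolding all_coords2_def r_def[symmetric] \<eta>_def[symmetric] by blast
    then show "\<bar>bq l i\<bar> \<le> r \<and> bq l i \<in> {\<eta> * of_int z | z. True} \<and> \<bar>bs l i - bq l i\<bar> \<le> \<eta>"
      by (rule closest_err[OF e0 pb[OF a]])
  qed
  have C1: "in_Theta_max N (\<epsilon> powr (- real k)) Wq bq"
    unfolding in_Theta_max_def all_coords_def r_def[symmetric] using QW Qb by blast
  have C2: "all_coords N Wq bq (\<lambda>q. q \<in> {2 powr (- (real m * real_of_int \<lceil>log 2 (1 / \<epsilon>)\<rceil>)) * of_int z | z. True})"
    unfolding all_coords_def \<eta>_def[symmetric] using QW Qb by blast
  define d where "d = N!0"
  define dout where "dout = N ! depth N"
  define M where "M = cube_measure d D"
  define F where "F = (\<lambda>x. ereal (Max ((\<lambda>i. \<bar>realization N Wt bs x i - realization N Wq bq x i\<bar>) ` {..<dout})))"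
  have dout1: "dout \<ge> 1" using arch lenN unfolding dout_def L_def by (simp add: nth_mem)
  have Fm: "F \<in> borel_measurable M"
    unfolding F_def M_def using real_meas by measurable
  have pt: "F x \<le> ereal \<epsilon>" if x: "x \<in> space M" for x
  proof -
    have xD: "\<forall>j<N!0. \<bar>x j\<bar> \<le> D"
      using x unfolding M_def cube_measure_def d_def by (auto simp: space_restrict_space space_PiM PiE_def Pi_def)
    define P where "P = r^(2*(L-1))*(D+1)"
    have P1: "P \<ge> 1"
    proof -
      have "r^(2*(L-1)) \<ge> 1" using r2 by (intro one_le_power) simp
      moreover have "D + 1 \<ge> 1" using D_pos by simp
      ultimately show ?thesis using mult_mono[of 1 "r^(2*(L-1))" 1 "D+1"] by (simp add: P_def)
    qed
    have Wb: "\<forall>l i j. 1 \<le> l \<and> l \<le> depth N \<and> i < N!l \<and> j < N!(l-1) \<longrightarrow>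
      \<bar>Wt l i j\<bar> \<le> r \<and> \<bar>Wq l i j\<bar> \<le> r \<and> \<bar>Wt l i j - Wq l i j\<bar> \<le> \<eta>"
      using pW QW by blast
    have bb: "\<forall>l i. 1 \<le> l \<and> l \<le> depth N \<and> i < N!l \<longrightarrow> \<bar>bs l i\<bar> \<le> r \<and> \<bar>bs l i - bq l i\<bar> \<le> \<eta>"
      using pb Qb by blast
    have HB0: "\<forall>i<N!(L-1). \<bar>hidden N Wt bs (L-1) x i\<bar> + 1 \<le> r^(2*(L-1))*(D+1)
       \<and> \<bar>hidden N Wt bs (L-1) x i - hidden N Wq bq (L-1) x i\<bar> \<le> real (L-1) * \<eta> * r^(2*(L-1)) * (D+1) / r"
      by (rule hidden_bounds[OF r2 less_imp_le[OF e0] less_imp_le[OF D_pos] wid Wb bb xD]) (simp add: L_def)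
    have HB: "\<forall>i<N!(L-1). \<bar>hidden N Wt bs (L-1) x i\<bar> + 1 \<le> P
       \<and> \<bar>hidden N Wt bs (L-1) x i - hidden N Wq bq (L-1) x i\<bar> \<le> real (L-1) * \<eta> * P / r"
      using HB0 unfolding P_def by (simp add: mult.assoc)
    have key: "\<bar>realization N Wt bs x i - realization N Wq bq x i\<bar> \<le> \<epsilon>" if i: "i < dout" for i
    proof -
      have LL: "L - 1 + 1 = L" "Suc (L - 1) = L" using L2 by auto
      let ?a = "(\<Sum>j<N!(L-1). Wt L i j * hidden N Wt bs (L-1) x j) + bs L i"
      let ?b = "(\<Sum>j<N!(L-1). Wq L i j * hidden N Wq bq (L-1) x j) + bq L i"
      have R1: "realization N Wt bs x i = ?a" using i unfolding realization_def affine_layer_def dout_def L_def by simp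
      have R2: "realization N Wq bq x i = ?b" using i unfolding realization_def affine_layer_def dout_def L_def by simp
      have nl: "real (N!(L-1)) \<le> r" using wid L2 unfolding L_def by auto
      have iL: "i < N!L" using i unfolding dout_def L_def .
      have B: "\<bar>?a - ?b\<bar> \<le> r*\<eta>*(P-1) + r*r*(real (L-1) * \<eta> * P / r) + \<eta>"
      proof (rule aff_diff)
        have L1: "1 \<le> L" "L \<le> depth N" "L - 1 = L - 1" using L2 unfolding L_def by auto
        show "real (N ! (L - 1)) \<le> r" by (rule nl)
        show "\<forall>j<N ! (L - 1). \<bar>hidden N Wt bs (L - 1) x j\<bar> \<le> P - 1" using HB by force
        show "\<forall>j<N ! (L - 1). \<bar>hidden N Wt bs (L - 1) x j - hidden N Wq bq (L - 1) x j\<bar> \<le> real (L - 1) * \<eta> * P / r" using HB by blast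
        show "\<forall>j<N ! (L - 1). \<bar>Wt L i j - Wq L i j\<bar> \<le> \<eta>" using QW L1 iL by blast
        show "\<forall>j<N ! (L - 1). \<bar>Wq L i j\<bar> \<le> r" using QW L1 iL by blast
        show "\<bar>bs L i - bq L i\<bar> \<le> \<eta>" using Qb L1 iL by blast
        show "0 \<le> P - 1" using P1 by simp
        show "0 \<le> real (L - 1) * \<eta> * P / r" using P1 e0 r2 by simp
        show "0 \<le> \<eta>" "0 \<le> r" using e0 r2 by auto
      qed
      have "r*\<eta>*(P-1) + r*r*(real (L-1) * \<eta> * P / r) + \<eta> \<le> real L * r * \<eta> * P"
      proof -
        have "r*r*(real (L-1) * \<eta> * P / r) = r * real (L-1) * \<eta> * P" using r2 by (simp add: field_simps)
        moreover have "real L * r * \<eta> * P = r * real (L-1) * \<eta> * P + r * \<eta> * P"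
          using L2 by (simp add: of_nat_diff algebra_simps)
        moreover have "r*\<eta>*(P-1) + \<eta> \<le> r * \<eta> * P" using r2 e0 mult_right_mono[of 1 r \<eta>] by (simp add: algebra_simps)
        ultimately show ?thesis by linarith
      qed
      also have "\<dots> \<le> r * r * \<eta> * P" using Lr r2 e0 P1
        by (intro mult_right_mono) auto
      also have "\<dots> = \<eta> * r^(2*L) * (D+1)"
      proof -
        have e2: "2*L = Suc (Suc (2*(L-1)))" using L2 by simp
        have "r^(2*L) = r * r * r^(2*(L-1))" by (simp only: e2 power_Suc mult.assoc)
        then show ?thesis unfolding P_def by (simp add: algebra_simps)
      qed
      also have "\<dots> \<le> \<epsilon>" unfolding \<eta>_def r_def
        by (rule eps_ineq[OF eps D_pos]) (use m_ge r2 in \<open>auto simp: L_def r_def\<close>)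
      finally show ?thesis using B R1 R2 by linarith
    qed
    have "Max ((\<lambda>i. \<bar>realization N Wt bs x i - realization N Wq bq x i\<bar>) ` {..<dout}) \<le> \<epsilon>"
      using key dout1 by (subst Max_le_iff) (auto simp: lessThan_empty_iff)
    then show ?thesis unfolding F_def by simp
  qed
  have C3: "esssup M F \<le> ereal \<epsilon>"
    by (rule esssup_I[OF Fm]) (use pt in auto)
  show ?thesis using C1 C2 C3 unfolding sup_norm_cube_def M_def F_def d_def dout_def by simp
qed

end
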